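(* Let $S=(\mathcal{E},\Sigma,X,\mathcal{O})$ be an entity and $e\in\mathcal{E}$. Then $\mathcal{F}(e)=\{F\subseteq\Sigma:\exists A\subseteq O(e),\ F=eig_e(A)\}$ is a closure system on $\Sigma$, i.e. $\emptyset\in\mathcal{F}(e)$, $\Sigma\in\mathcal{F}(e)$, and $\mathcal{F}(e)$ is closed under arbitrary intersections.
   Context: An entity $S=(\mathcal{E},\Sigma,X,\mathcal{O})$ consists of sets $\mathcal{E},\Sigma$ and for each $e\in\mathcal{E},p\in\Sigma$ a nonempty set $O(e,p)$, with $X=\bigcup O(e,p)$; $O(e)=\bigcup_{p\in\Sigma}O(e,p)$. The eigen map $eig_e:\mathcal{P}(O(e))\to\mathcal{P}(\Sigma)$ is defined by $p\in eig_e(A)\iff O(e,p)\subseteq A$. *)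

theory Defs
  imports Main
begin

definition entity :: "'e set \<Rightarrow> 'p set \<Rightarrow> 'x set \<Rightarrow> ('e \<Rightarrow> 'p \<Rightarrow> 'x set) \<Rightarrow> bool" where
  "entity E Sg X Obs \<longleftrightarrow>
     (\<forall>e\<in>E. \<forall>p\<in>Sg. Obs e p \<noteq> {}) \<and> X = (\<Union>e\<in>E. \<Union>p\<in>Sg. Obs e p)"

definition outcomes :: "'p set \<Rightarrow> ('e \<Rightarrow> 'p \<Rightarrow> 'x set) \<Rightarrow> 'e \<Rightarrow> 'x set" where
  "outcomes Sg Obs e = (\<Union>p\<in>Sg. Obs e p)"

definition eig :: "'p set \<Rightarrow> ('e \<Rightarrow> 'p \<Rightarrow> 'x set) \<Rightarrow> 'e \<Rightarrow> 'x set \<Rightarrow> 'p set" where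
  "eig Sg Obs e A = {p \<in> Sg. Obs e p \<subseteq> A}"

definition eigfam :: "'p set \<Rightarrow> ('e \<Rightarrow> 'p \<Rightarrow> 'x set) \<Rightarrow> 'e \<Rightarrow> 'p set set" where
  "eigfam Sg Obs e = {F. \<exists>A. A \<subseteq> outcomes Sg Obs e \<and> F = eig Sg Obs e A}"

end

theory Submission
  imports Defs
begin

theorem mainTheorem10:
  assumes "entity E Sg X Obs" and "e \<in> E"
  shows "{} \<in> eigfam Sg Obs e \<and> Sg \<in> eigfam Sg Obs e \<and>
         (\<forall>G. G \<subseteq> eigfam Sg Obs e \<longrightarrow> Sg \<inter> \<Inter>G \<in> eigfam Sg Obs e)"
proof (intro conjI allI impI)
  have ne: "\<And>p. p \<in> Sg \<Longrightarrow> Obs e p \<noteq> {}" using assms unfolding entity_def by blast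
  have "eig Sg Obs e {} = {}" using ne unfolding eig_def by auto
  then show "{} \<in> eigfam Sg Obs e" unfolding eigfam_def by force
  have "eig Sg Obs e (outcomes Sg Obs e) = Sg" unfolding eig_def outcomes_def by auto
  then show "Sg \<in> eigfam Sg Obs e" unfolding eigfam_def by force
next
  fix G assume G: "G \<subseteq> eigfam Sg Obs e"
  define A where "A = (\<Union>p\<in>Sg \<inter> \<Inter>G. Obs e p)"
  have "A \<subseteq> outcomes Sg Obs e" unfolding A_def outcomes_def by auto
  moreover have "eig Sg Obs e A = Sg \<inter> \<Inter>G"
  proof
    show "Sg \<inter> \<Inter>G \<subseteq> eig Sg Obs e A" unfolding eig_def A_def by auto
  next
    show "eig Sg Obs e A \<subseteq> Sg \<inter> \<Inter>G"
    proof
      fix q assume q: "q \<in> eig Sg Obs e A"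
      have "q \<in> F" if FG: "F \<in> G" for F
      proof -
        obtain B where B: "F = eig Sg Obs e B" using G FG unfolding eigfam_def by auto
        have "A \<subseteq> B" unfolding A_def using FG B by (auto simp: eig_def)
        then show ?thesis using q B by (auto simp: eig_def)
      qed
      then show "q \<in> Sg \<inter> \<Inter>G" using q by (auto simp: eig_def)
    qed
  qed
  ultimately show "Sg \<inter> \<Inter>G \<in> eigfam Sg Obs e" unfolding eigfam_def by blast
qed

end
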